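(* Let $z$ lie in the upper half-plane and let $E_4,\Delta_{24}$ and $\rho_n$ ($n\in\mathbb{N}$) be as in the context. Then for every integer $n\geq 3$, $$\rho_n(z)=2E_4(z)\,\rho_{n-1}(z)-E_4(z)^2\,\rho_{n-2}(z)+2^8\Delta_{24}(z)\,\rho_{n-3}(z).$$
   Context: For $z$ with $\mathrm{Im}(z)>0$ put $q=e^{\pi\sqrt{-1}z}$ and define $\vartheta_2(z)=\sum_{m\in\mathbb{Z}}q^{(m+1/2)^2}$, $\vartheta_3(z)=\sum_{m\in\mathbb{Z}}q^{m^2}$, $\vartheta_4(z)=\sum_{m\in\mathbb{Z}}(-q)^{m^2}$. Define $E_4(z)=\frac12(\vartheta_2(z)^8+\vartheta_3(z)^8+\vartheta_4(z)^8)$, $\Delta_{24}(z)=\left(\frac{\vartheta_2(z)\vartheta_3(z)\vartheta_4(z)}{2}\right)^8$, and for a nonnegative integer $n$, $$\rho_n(z)=\frac{\vartheta_3(z)^{8(n+1)+4}-\vartheta_2(z)^{8(n+1)+4}-\vartheta_4(z)^{8(n+1)+4}}{(\vartheta_2(z)\vartheta_3(z)\vartheta_4(z))^4}.$$ *)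

theory Defs
  imports "HOL-Analysis.Analysis"
begin

text \<open>Jacobi theta functions on the upper half-plane, with q = exp(pi i z) and
  q^r read as exp(pi i z r) for real exponents r.  The sums over the integers are
  absolutely convergent for Im z > 0, rendered as unordered infinite sums.\<close>

definition theta2 :: "complex \<Rightarrow> complex" where
  "theta2 z = (\<Sum>\<^sub>\<infinity>m\<in>(UNIV::int set). exp (pi * \<i> * z * of_real ((real_of_int m + 1/2)^2)))"

definition theta3 :: "complex \<Rightarrow> complex" where
  "theta3 z = (\<Sum>\<^sub>\<infinity>m\<in>(UNIV::int set). exp (pi * \<i> * z) ^ (nat (m^2)))"

definition theta4 :: "complex \<Rightarrow> complex" where
  "theta4 z = (\<Sum>\<^sub>\<infinity>m\<in>(UNIV::int set). (- exp (pi * \<i> * z)) ^ (nat (m^2)))"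

definition E4 :: "complex \<Rightarrow> complex" where
  "E4 z = (theta2 z ^ 8 + theta3 z ^ 8 + theta4 z ^ 8) / 2"

definition Delta24 :: "complex \<Rightarrow> complex" where
  "Delta24 z = (theta2 z * theta3 z * theta4 z / 2) ^ 8"

definition rho :: "nat \<Rightarrow> complex \<Rightarrow> complex" where
  "rho n z = (theta3 z ^ (8*(n+1)+4) - theta2 z ^ (8*(n+1)+4) - theta4 z ^ (8*(n+1)+4))
             / (theta2 z * theta3 z * theta4 z) ^ 4"

end

theory Submission
  imports Defs
begin


lemma geo_int_summable:
  fixes r :: real assumes r0: "0 \<le> r" and r1: "r < 1"
  shows "(\<lambda>m::int. r ^ nat \<bar>m\<bar>) summable_on UNIV"
proof -
  have g: "(\<lambda>n::nat. r ^ n) summable_on UNIV"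
    using r0 r1 by (subst summable_on_UNIV_nonneg_real_iff) (auto intro: summable_geometric)
  have "(\<lambda>m::int. r ^ nat \<bar>m\<bar>) summable_on (int ` UNIV)"
    by (subst summable_on_reindex) (auto simp: o_def g)
  moreover have "(\<lambda>m::int. r ^ nat \<bar>m\<bar>) summable_on ((\<lambda>n. - int n) ` UNIV)"
    by (subst summable_on_reindex) (auto simp: o_def g inj_on_def)
  ultimately have "(\<lambda>m::int. r ^ nat \<bar>m\<bar>) summable_on (int ` UNIV \<union> (\<lambda>n. - int n) ` UNIV)"
    by (rule summable_on_union)
  moreover have "int ` UNIV \<union> (\<lambda>n. - int n) ` UNIV = UNIV"
  proof (rule set_eqI)
    fix m :: int show "m \<in> int ` UNIV \<union> (\<lambda>n. - int n) ` UNIV \<longleftrightarrow> m \<in> UNIV"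
      proof (cases "m \<ge> 0")
        case True then have "m = int (nat m)" by simp
        then show ?thesis by blast
      next
        case False then have "m = - int (nat (-m))" by simp
        then show ?thesis by blast
      qed
  qed
  ultimately show ?thesis by simp
qed

lemma gauss_int_summable:
  fixes t a :: real assumes t: "t > 0"
  shows "(\<lambda>m::int. exp (- t * (of_int m + a)^2)) summable_on UNIV"
proof -
  define r where "r = exp (-t)"
  have r0: "0 \<le> r" and r1: "r < 1" using t by (auto simp: r_def)
  have "(\<lambda>m::int. exp (t * (\<bar>a\<bar> + 1)) * r ^ nat \<bar>m\<bar>) summable_on UNIV"
    by (intro summable_on_cmult_right geo_int_summable r0 r1)
  then show ?thesis
  proof (rule summable_on_comparison_test)
    fix m :: int
    have rp: "r ^ nat \<bar>m\<bar> = exp (- t * \<bar>of_int m\<bar>)"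
    proof -
      have "r ^ nat \<bar>m\<bar> = exp (of_nat (nat \<bar>m\<bar>) * (-t))" unfolding r_def by (rule exp_of_nat_mult[symmetric])
      also have "of_nat (nat \<bar>m\<bar>) = \<bar>real_of_int m\<bar>" by simp
      finally show ?thesis by (metis mult.commute)
    qed
    have q: "(of_int m + a)^2 \<ge> \<bar>of_int m\<bar> - \<bar>a\<bar> - 1"
    proof -
      have "\<bar>of_int m\<bar> \<le> \<bar>of_int m + a\<bar> + \<bar>a\<bar>" by linarith
      moreover have "\<bar>of_int m + a\<bar> \<le> (of_int m + a)^2 + 1"
      proof -
        have h1: "0 \<le> (\<bar>of_int m + a\<bar> - 1/2)^2" by simp
        have h2: "(\<bar>of_int m + a\<bar> - 1/2)^2 = (of_int m + a)^2 - \<bar>of_int m + a\<bar> + 1/4"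
          by (simp add: power2_eq_square algebra_simps abs_mult_self_eq)
        show ?thesis using h1 h2 by linarith
      qed
      ultimately show ?thesis by linarith
    qed
    have "- t * (of_int m + a)^2 \<le> t * (\<bar>a\<bar> + 1) + (- t * \<bar>of_int m\<bar>)"
      using mult_left_mono[OF q, of t] t by (simp add: algebra_simps)
    then have "exp (- t * (of_int m + a)^2) \<le> exp (t * (\<bar>a\<bar> + 1) + (- t * \<bar>of_int m\<bar>))"
      by (simp only: exp_le_cancel_iff)
    also have "\<dots> = exp (t * (\<bar>a\<bar> + 1)) * r ^ nat \<bar>m\<bar>"
      by (simp only: exp_add rp)
    finally show "exp (- t * (of_int m + a)^2) \<le> exp (t * (\<bar>a\<bar> + 1)) * r ^ nat \<bar>m\<bar>" .
  qed auto
qed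


definition tt :: "complex \<Rightarrow> real \<Rightarrow> int \<Rightarrow> complex" where
  "tt z a m = exp (pi * \<i> * z * of_real ((real_of_int m + a)^2))"

definition S :: "complex \<Rightarrow> real \<Rightarrow> complex" where
  "S z a = (\<Sum>\<^sub>\<infinity>m\<in>(UNIV::int set). tt z a m)"

lemma norm_tt: "norm (tt z a m) = exp (- (pi * Im z) * (real_of_int m + a)^2)"
  by (simp add: tt_def)

lemma tt_summable:
  assumes "Im z > 0" shows "tt z a summable_on UNIV"
proof -
  have "(\<lambda>m. norm (tt z a m)) summable_on UNIV"
    unfolding norm_tt using assms by (intro gauss_int_summable) simp
  then show ?thesis by (simp add: summable_on_iff_abs_summable_on_complex)
qed

lemma prod_summable_complex:
  fixes f g :: "'a \<Rightarrow> complex"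
  assumes f: "f summable_on A" and g: "g summable_on B"
  shows "(\<lambda>(x,y). f x * g y) summable_on (A \<times> B)"
proof -
  have fa: "(\<lambda>x. norm (f x)) summable_on A" and ga: "(\<lambda>x. norm (g x)) summable_on B"
    using f g by (simp_all add: summable_on_iff_abs_summable_on_complex)
  let ?h = "\<lambda>(x,y). f x * g y"
  have "(\<lambda>p. norm (?h p)) summable_on (Sigma A (\<lambda>_. B))"
  proof (rule Infinite_Sum.abs_summable_on_Sigma_iff[THEN iffD2], intro conjI ballI)
    fix x assume "x \<in> A"
    show "(\<lambda>y. norm (?h (x, y))) summable_on B"
      by (simp add: norm_mult summable_on_cmult_right ga)
  next
    have "(\<lambda>x. norm (f x) * infsum (\<lambda>y. norm (g y)) B) summable_on A"
      by (intro summable_on_cmult_left fa)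
    then show "(\<lambda>x. norm (\<Sum>\<^sub>\<infinity>y\<in>B. norm (?h (x, y)))) summable_on A"
      by (simp add: norm_mult infsum_cmult_right' infsum_nonneg abs_mult)
  qed
  then show ?thesis by (simp add: summable_on_iff_abs_summable_on_complex)
qed

lemma infsum_prod_complex:
  fixes f g :: "'a \<Rightarrow> complex"
  assumes f: "f summable_on A" and g: "g summable_on B"
  shows "(\<Sum>\<^sub>\<infinity>(x,y)\<in>A \<times> B. f x * g y) = infsum f A * infsum g B"
proof -
  have "(\<Sum>\<^sub>\<infinity>(x,y)\<in>A \<times> B. f x * g y) = (\<Sum>\<^sub>\<infinity>x\<in>A. \<Sum>\<^sub>\<infinity>y\<in>B. f x * g y)"
    using infsum_Sigma_banach[of "\<lambda>(x,y). f x * g y" A "\<lambda>_. B"] prod_summable_complex[OF f g]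
    by simp
  also have "\<dots> = (\<Sum>\<^sub>\<infinity>x\<in>A. f x * infsum g B)"
    by (simp add: infsum_cmult_right')
  also have "\<dots> = infsum f A * infsum g B"
    by (simp add: infsum_cmult_left')
  finally show ?thesis .
qed


lemma exp_split:
  fixes c :: complex
  assumes "X + Y = 2 * X' + 2 * Y'"
  shows "exp (c * of_real X) * exp (c * of_real Y) = exp (2 * c * of_real X') * exp (2 * c * of_real Y')"
proof -
  have h: "complex_of_real X + of_real Y = 2 * of_real X' + 2 * of_real Y'"
    using arg_cong[OF assms, of complex_of_real] by simp
  have "exp (c * of_real X) * exp (c * of_real Y) = exp (c * (of_real X + of_real Y))"
    by (simp add: exp_add[symmetric] distrib_left)
  also have "\<dots> = exp (2 * c * of_real X' + 2 * c * of_real Y')"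
    by (simp add: h algebra_simps)
  finally show ?thesis by (simp add: exp_add)
qed

lemma tt_split:
  assumes "(real_of_int m + a)^2 + (real_of_int n + b)^2 = 2 * (real_of_int r + a')^2 + 2 * (real_of_int s + b')^2"
  shows "tt z a m * tt z b n = tt (2*z) a' r * tt (2*z) b' s"
  using exp_split[OF assms, of "pi * \<i> * z"] unfolding tt_def by (simp add: mult_ac)

lemma S_dup:
  assumes z: "Im z > 0"
  shows "S z a * S z b = S (2*z) ((a+b)/2) * S (2*z) ((a-b)/2)
                       + S (2*z) ((a+b+1)/2) * S (2*z) ((a-b+1)/2)"
proof -
  have z2: "Im (2*z) > 0" using z by simp
  define h where "h = (\<lambda>(m,n). tt z a m * tt z b n)"
  have hs: "h summable_on UNIV"
    unfolding h_def using prod_summable_complex[OF tt_summable[OF z] tt_summable[OF z], of a b]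
    by simp
  define E where "E = {p::int\<times>int. even (fst p + snd p)}"
  define Od where "Od = {p::int\<times>int. odd (fst p + snd p)}"
  have UEO: "UNIV = E \<union> Od" and dEO: "E \<inter> Od = {}" by (auto simp: E_def Od_def)
  have "S z a * S z b = infsum h UNIV"
    unfolding S_def h_def using infsum_prod_complex[OF tt_summable[OF z] tt_summable[OF z], of a b]
    by simp
  also have "\<dots> = infsum h E + infsum h Od"
    unfolding UEO by (rule infsum_Un_disjoint[OF summable_on_subset[OF hs] summable_on_subset[OF hs] dEO]) auto
  also have "infsum h E = (\<Sum>\<^sub>\<infinity>(r,s)\<in>UNIV. tt (2*z) ((a+b)/2) r * tt (2*z) ((a-b)/2) s)"
  proof -
    have bij: "bij_betw (\<lambda>(r,s). (r+s, r-s)) UNIV E"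
    proof (rule bij_betwI')
      fix x y :: "int \<times> int"
      show "((\<lambda>(r,s). (r+s, r-s)) x = (\<lambda>(r,s). (r+s, r-s)) y) = (x = y)"
        by (cases x; cases y) auto
    next
      fix x :: "int \<times> int" show "(\<lambda>(r,s). (r+s, r-s)) x \<in> E"
        by (cases x) (auto simp: E_def)
    next
      fix y :: "int \<times> int" assume "y \<in> E"
      then obtain m n where y: "y = (m,n)" and e: "even (m+n)" by (cases y) (auto simp: E_def)
      then obtain k where k: "m + n = 2*k" using evenE by blast
      show "\<exists>x\<in>UNIV. y = (\<lambda>(r,s). (r+s, r-s)) x"
        by (rule bexI[of _ "(k, m - k)"]) (use y k in auto)
    qed
    have "infsum h E = (\<Sum>\<^sub>\<infinity>p\<in>UNIV. h ((\<lambda>(r,s). (r+s, r-s)) p))"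
      using infsum_reindex_bij_betw[OF bij, of h] by simp
    also have "\<dots> = (\<Sum>\<^sub>\<infinity>(r,s)\<in>UNIV. tt (2*z) ((a+b)/2) r * tt (2*z) ((a-b)/2) s)"
    proof (rule infsum_cong)
      fix p :: "int \<times> int"
      obtain r s where p: "p = (r,s)" by (cases p)
      have "(real_of_int (r+s) + a)^2 + (real_of_int (r-s) + b)^2
            = 2 * (real_of_int r + (a+b)/2)^2 + 2 * (real_of_int s + (a-b)/2)^2"
        by (simp add: power2_eq_square field_simps)
      then show "h ((\<lambda>(r,s). (r+s, r-s)) p) = (case p of (r,s) \<Rightarrow> tt (2*z) ((a+b)/2) r * tt (2*z) ((a-b)/2) s)"
        unfolding p h_def by (simp add: tt_split)
    qed
    finally show ?thesis .
  qed
  also have "infsum h Od = (\<Sum>\<^sub>\<infinity>(r,s)\<in>UNIV. tt (2*z) ((a+b+1)/2) r * tt (2*z) ((a-b+1)/2) s)"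
  proof -
    have bij: "bij_betw (\<lambda>(r,s). (r+s+1, r-s)) UNIV Od"
    proof (rule bij_betwI')
      fix x y :: "int \<times> int"
      show "((\<lambda>(r,s). (r+s+1, r-s)) x = (\<lambda>(r,s). (r+s+1, r-s)) y) = (x = y)"
        by (cases x; cases y) auto
    next
      fix x :: "int \<times> int" show "(\<lambda>(r,s). (r+s+1, r-s)) x \<in> Od"
        by (cases x) (auto simp: Od_def)
    next
      fix y :: "int \<times> int" assume "y \<in> Od"
      then obtain m n where y: "y = (m,n)" and e: "odd (m+n)" by (cases y) (auto simp: Od_def)
      then obtain k where k: "m + n = 2*k+1" using oddE by blast
      show "\<exists>x\<in>UNIV. y = (\<lambda>(r,s). (r+s+1, r-s)) x"
        by (rule bexI[of _ "(k, m - k - 1)"]) (use y k in auto)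
    qed
    have "infsum h Od = (\<Sum>\<^sub>\<infinity>p\<in>UNIV. h ((\<lambda>(r,s). (r+s+1, r-s)) p))"
      using infsum_reindex_bij_betw[OF bij, of h] by simp
    also have "\<dots> = (\<Sum>\<^sub>\<infinity>(r,s)\<in>UNIV. tt (2*z) ((a+b+1)/2) r * tt (2*z) ((a-b+1)/2) s)"
    proof (rule infsum_cong)
      fix p :: "int \<times> int"
      obtain r s where p: "p = (r,s)" by (cases p)
      have "(real_of_int (r+s+1) + a)^2 + (real_of_int (r-s) + b)^2
            = 2 * (real_of_int r + (a+b+1)/2)^2 + 2 * (real_of_int s + (a-b+1)/2)^2"
        by (simp add: power2_eq_square field_simps)
      then show "h ((\<lambda>(r,s). (r+s+1, r-s)) p) = (case p of (r,s) \<Rightarrow> tt (2*z) ((a+b+1)/2) r * tt (2*z) ((a-b+1)/2) s)"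
        unfolding p h_def by (simp add: tt_split)
    qed
    finally show ?thesis .
  qed
  finally show ?thesis
    using infsum_prod_complex[OF tt_summable[OF z2] tt_summable[OF z2], of "(a+b)/2" "(a-b)/2"]
      infsum_prod_complex[OF tt_summable[OF z2] tt_summable[OF z2], of "(a+b+1)/2" "(a-b+1)/2"]
    by (simp add: S_def)
qed

lemma S_shift: "S w (a + 1) = S w a"
proof -
  have bij: "bij_betw (\<lambda>m::int. m + 1) UNIV UNIV"
    by (rule bij_betwI'[where Y=UNIV]) (auto intro: exI[of _ "_ - 1"])
  have "S w (a+1) = (\<Sum>\<^sub>\<infinity>m\<in>UNIV. tt w a (m + 1))"
    unfolding S_def by (rule infsum_cong) (simp add: tt_def add_ac)
  also have "\<dots> = S w a" unfolding S_def by (rule infsum_reindex_bij_betw[OF bij])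
  finally show ?thesis .
qed


lemma theta2_S: "theta2 z = S z (1/2)"
  unfolding theta2_def S_def tt_def by simp

lemma nat_sq: "(of_nat (nat (m^2)) :: complex) = of_real ((real_of_int m + 0)^2)"
proof -
  have "(of_nat (nat (m^2)) :: complex) = of_int (m^2)" by (simp add: of_nat_nat)
  then show ?thesis by simp
qed

lemma theta3_S: "theta3 z = S z 0"
  unfolding theta3_def S_def
proof (rule infsum_cong)
  fix m :: int
  have "exp (pi * \<i> * z) ^ nat (m^2) = exp (of_nat (nat (m^2)) * (pi * \<i> * z))"
    by (rule exp_of_nat_mult[symmetric])
  also have "\<dots> = tt z 0 m" unfolding tt_def nat_sq by (simp only: mult_ac)
  finally show "exp (pi * \<i> * z) ^ nat (m^2) = tt z 0 m" .
qed

lemma theta4_S: "theta4 z = S (z + 1) 0"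
  unfolding theta4_def S_def
proof (rule infsum_cong)
  fix m :: int
  define k where "k = nat (m^2)"
  have "tt (z + 1) 0 m = exp (of_nat k * (pi * \<i> * (z + 1)))"
    unfolding tt_def k_def nat_sq by (simp only: mult_ac)
  also have "of_nat k * (pi * \<i> * (z + 1)) = of_nat k * (of_real pi * \<i>) + of_nat k * (pi * \<i> * z)"
    by (simp add: algebra_simps)
  also have "exp (of_nat k * (of_real pi * \<i>) + of_nat k * (pi * \<i> * z)) = (-1) ^ k * exp (pi * \<i> * z) ^ k"
    by (simp only: exp_add exp_of_nat_mult exp_pi_i)
  also have "\<dots> = (- exp (pi * \<i> * z)) ^ k"
    by (simp add: power_mult_distrib[symmetric])
  finally show "(- exp (pi * \<i> * z)) ^ nat (m^2) = tt (z + 1) 0 m" unfolding k_def by simp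
qed

lemma S_period0: "S (z + 2) 0 = S z 0"
  unfolding S_def
proof (rule infsum_cong)
  fix m :: int
  define k where "k = nat (m^2)"
  have kk: "complex_of_real ((real_of_int m + 0)^2) = of_nat k" unfolding k_def nat_sq ..
  have arg: "pi * \<i> * (z + 2) * complex_of_real ((real_of_int m + 0)^2)
      = pi * \<i> * z * complex_of_real ((real_of_int m + 0)^2) + of_nat k * (2 * of_real pi * \<i>)"
    unfolding kk by (simp add: algebra_simps)
  have "tt (z + 2) 0 m = tt z 0 m * exp (of_nat k * (2 * of_real pi * \<i>))"
    unfolding tt_def arg by (simp only: exp_add)
  also have "\<dots> = tt z 0 m" by (simp only: exp_of_nat_mult exp_two_pi_i power_one mult_1_right)
  finally show "tt (z + 2) 0 m = tt z 0 m" .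
qed

lemma exp_pi_half: "exp (of_real pi * \<i> / 2) = \<i>"
proof -
  have "of_real pi * \<i> / 2 = \<i> * complex_of_real (pi / 2)" by simp
  then show ?thesis by (simp only: cis_conv_exp[symmetric] cis_pi_half)
qed

lemma S_period1: "S (z + 2) (1/2) = \<i> * S z (1/2)"
  unfolding S_def infsum_cmult_right'[symmetric]
proof (rule infsum_cong)
  fix m :: int
  define k where "k = nat (m^2 + m)"
  have kk: "(real_of_int m + 1/2)^2 = real k + 1/4"
  proof -
    have "m * (m + 1) \<ge> 0"
      by (cases "m \<ge> 0") (simp_all add: mult_nonpos_nonpos)
    then have "m^2 + m \<ge> 0" by (simp add: power2_eq_square algebra_simps)
    then have "real k = real_of_int (m^2 + m)" unfolding k_def by simp
    then show ?thesis by (simp add: power2_eq_square algebra_simps)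
  qed
  have kkc: "complex_of_real ((real_of_int m + 1/2)^2) = of_nat k + 1/4"
    unfolding kk by simp
  have arg: "pi * \<i> * (z + 2) * complex_of_real ((real_of_int m + 1/2)^2)
      = pi * \<i> * z * complex_of_real ((real_of_int m + 1/2)^2) + (of_nat k * (2 * of_real pi * \<i>) + of_real pi * \<i> / 2)"
    unfolding kkc by (simp add: algebra_simps)
  have "tt (z + 2) (1/2) m = tt z (1/2) m * (exp (of_nat k * (2 * of_real pi * \<i>)) * exp (of_real pi * \<i> / 2))"
    unfolding tt_def arg by (simp only: exp_add)
  also have "\<dots> = tt z (1/2) m * \<i>"
    by (simp only: exp_of_nat_mult exp_two_pi_i power_one mult_1_left exp_pi_half)
  finally show "tt (z + 2) (1/2) m = \<i> * tt z (1/2) m" by simp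
qed

lemma jacobi:
  assumes z: "Im z > 0"
  shows "theta3 z ^ 4 = theta2 z ^ 4 + theta4 z ^ 4"
proof -
  define A where "A = S (2*z) 0"
  define B where "B = S (2*z) (1/2)"
  have z1: "Im (z + 1) > 0" using z by simp
  have t3: "theta3 z ^ 2 = A^2 + B^2"
  proof -
    have "S z 0 * S z 0 = S (2*z) 0 * S (2*z) 0 + S (2*z) (1/2) * S (2*z) (1/2)"
      using S_dup[OF z, of 0 0] by simp
    then show ?thesis unfolding theta3_S A_def B_def by (simp only: power2_eq_square)
  qed
  have t2: "theta2 z ^ 2 = 2 * A * B"
  proof -
    have "S z (1/2) * S z (1/2) = S (2*z) (1/2) * S (2*z) 0 + S (2*z) (0+1) * S (2*z) (1/2)"
      using S_dup[OF z, of "1/2" "1/2"] by simp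
    then show ?thesis unfolding theta2_S A_def B_def S_shift by (simp only: power2_eq_square) simp
  qed
  have e1: "S (2*z + 2) 0 = A" unfolding A_def by (rule S_period0)
  have e2: "S (2*z + 2) (1/2) = \<i> * B" unfolding B_def by (rule S_period1)
  have t4: "theta4 z ^ 2 = A^2 - B^2"
  proof -
    have "S (z+1) 0 * S (z+1) 0 = S (2*(z+1)) 0 * S (2*(z+1)) 0 + S (2*(z+1)) (1/2) * S (2*(z+1)) (1/2)"
      using S_dup[OF z1, of 0 0] by simp
    also have "2*(z+1) = 2*z + 2" by simp
    finally have "S (z+1) 0 * S (z+1) 0 = A * A + (\<i> * B) * (\<i> * B)" unfolding e1 e2 .
    then show ?thesis unfolding theta4_S power2_eq_square by (simp add: algebra_simps)
  qed
  have "theta3 z ^ 4 = (theta3 z ^ 2)^2" by simp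
  also have "\<dots> = (theta2 z ^ 2)^2 + (theta4 z ^ 2)^2"
    unfolding t3 t2 t4 by (simp add: power2_eq_square algebra_simps)
  finally show ?thesis by simp
qed

lemma poly6:
  fixes A B C X :: complex
  assumes AB: "A = B + C" and X: "X = A \<or> X = B \<or> X = C"
  shows "X^6 = 2 * (B^2 + B*C + C^2) * X^4 - (B^2 + B*C + C^2)^2 * X^2 + A^2 * B^2 * C^2"
  using X
proof (elim disjE)
  assume X: "X = A" show ?thesis unfolding X AB by algebra
next
  assume X: "X = B" show ?thesis unfolding X AB by algebra
next
  assume X: "X = C" show ?thesis unfolding X AB by algebra
qed

lemma rec_X:
  fixes A B C X E :: complex
  assumes AB: "A = B + C" and X: "X = A \<or> X = B \<or> X = C" and E: "E = (A^2 + B^2 + C^2) / 2"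
  shows "X^(2*(k+3)+3) = 2 * E * X^(2*(k+2)+3) - E^2 * X^(2*(k+1)+3) + A^2 * B^2 * C^2 * X^(2*k+3)"
proof -
  have E': "E = B^2 + B*C + C^2" unfolding E AB by (simp add: field_simps power2_eq_square)
  define Y where "Y = X^(2*k+3)"
  have p6: "X^(2*(k+3)+3) = Y * X^6" unfolding Y_def by (simp add: power_add[symmetric])
  have p4: "X^(2*(k+2)+3) = Y * X^4" unfolding Y_def by (simp add: power_add[symmetric])
  have p2: "X^(2*(k+1)+3) = Y * X^2" unfolding Y_def by (simp add: power_add[symmetric])
  show ?thesis unfolding p6 p4 p2 Y_def[symmetric] poly6[OF AB X] E' by algebra
qed

theorem lemma2p3:
  fixes z :: complex and n :: nat
  assumes "Im z > 0" and "n \<ge> 3"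
  shows "rho n z = 2 * E4 z * rho (n-1) z - E4 z ^ 2 * rho (n-2) z
                   + 2^8 * Delta24 z * rho (n-3) z"
proof -
  obtain k where n: "n = k + 3" using assms(2) by (metis add.commute le_Suc_ex)
  define A where "A = theta3 z ^ 4"
  define B where "B = theta2 z ^ 4"
  define C where "C = theta4 z ^ 4"
  define D where "D = (theta2 z * theta3 z * theta4 z) ^ 4"
  have AB: "A = B + C" unfolding A_def B_def C_def by (rule jacobi[OF assms(1)])
  define N where "N j = A^(2*j+3) - B^(2*j+3) - C^(2*j+3)" for j
  have pw: "w ^ (8*(j+1)+4) = (w^4)^(2*j+3)" for w :: complex and j
    by (simp add: power_mult[symmetric] algebra_simps)
  have rho_eq: "rho j z = N j / D" for j
    unfolding rho_def N_def D_def pw A_def B_def C_def ..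
  have E4_eq: "E4 z = (A^2 + B^2 + C^2) / 2"
    unfolding E4_def A_def B_def C_def by (simp add: power_mult[symmetric] add_ac)
  have D_eq: "2^8 * Delta24 z = A^2 * B^2 * C^2"
    unfolding Delta24_def A_def B_def C_def
    by (simp add: power_mult[symmetric] power_mult_distrib power_divide)
  have Nrec: "N (k+3) = 2 * E4 z * N (k+2) - E4 z ^ 2 * N (k+1) + 2^8 * Delta24 z * N k"
    unfolding N_def D_eq
      rec_X[OF AB disjI1[OF refl] E4_eq, of k]
      rec_X[OF AB disjI2[OF disjI1[OF refl]] E4_eq, of k]
      rec_X[OF AB disjI2[OF disjI2[OF refl]] E4_eq, of k]
    by (simp add: algebra_simps)
  have "rho n z = N (k+3) / D" by (simp add: rho_eq n)
  also have "\<dots> = 2 * E4 z * (N (k+2) / D) - E4 z ^ 2 * (N (k+1) / D) + 2^8 * Delta24 z * (N k / D)"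
    unfolding Nrec by (simp add: diff_divide_distrib add_divide_distrib)
  also have "\<dots> = 2 * E4 z * rho (n-1) z - E4 z ^ 2 * rho (n-2) z + 2^8 * Delta24 z * rho (n-3) z"
    by (simp add: rho_eq n numeral_eq_Suc)
  finally show ?thesis .
qed

end
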